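(* $\mathbb{T}$ satisfies Axiom A, witnessed by the orderings $q\leq_n p$ iff $q\leq p$ and the sets of splitting levels $A_q$ and $A_p$ coincide on their first $n+1$ elements.
   Context: $\mathbb{T}$ is the tree-forcing (ordered by inclusion) consisting of perfect trees $p\subseteq 3^{<\omega}$ together with a set $A_p\subseteq\omega$ (the splitting levels of $p$) such that: for every $t\in p$, $|t|\in A_p$ iff $t$ is a splitting node of $p$; every splitting node $t$ is fully splitting (i.e. $t^\frown i\in p$ for every $i\in 3$); for every $s\supseteq \mathrm{stem}(p)$ which is not splitting, $s^\frown 2\notin p$; and for all non-splitting $s,t\in p$ with $|s|=|t|$ and all $i\in 2$, $s^\frown i\in p\Leftrightarrow t^\frown i\in p$. Here $s^\frown i$ denotes the sequence $s$ extended by the value $i$, and $\mathrm{stem}(p)$ is the longest node of $p$ comparable with every node of $p$. *)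

theory Defs
  imports Main "HOL-Library.Sublist" "HOL-Library.Infinite_Set" "HOL-Library.Countable_Set"
begin

definition compatible :: "'a set \<Rightarrow> ('a \<Rightarrow> 'a \<Rightarrow> bool) \<Rightarrow> 'a \<Rightarrow> 'a \<Rightarrow> bool" where
  "compatible P le p q \<longleftrightarrow> (\<exists>r\<in>P. le r p \<and> le r q)"

definition antichain :: "'a set \<Rightarrow> ('a \<Rightarrow> 'a \<Rightarrow> bool) \<Rightarrow> 'a set \<Rightarrow> bool" where
  "antichain P le A \<longleftrightarrow> A \<subseteq> P \<and> (\<forall>a\<in>A. \<forall>b\<in>A. a \<noteq> b \<longrightarrow> \<not> compatible P le a b)"

definition axiomA :: "'a set \<Rightarrow> ('a \<Rightarrow> 'a \<Rightarrow> bool) \<Rightarrow> (nat \<Rightarrow> 'a \<Rightarrow> 'a \<Rightarrow> bool) \<Rightarrow> bool" where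
  "axiomA P le len \<longleftrightarrow>
     (\<forall>p\<in>P. le p p) \<and>
     (\<forall>p\<in>P. \<forall>q\<in>P. \<forall>r\<in>P. le r q \<longrightarrow> le q p \<longrightarrow> le r p) \<and>
     (\<forall>n. \<forall>p\<in>P. len n p p) \<and>
     (\<forall>n. \<forall>p\<in>P. \<forall>q\<in>P. \<forall>r\<in>P. len n r q \<longrightarrow> len n q p \<longrightarrow> len n r p) \<and>
     (\<forall>p\<in>P. \<forall>q\<in>P. len 0 q p \<longrightarrow> le q p) \<and>
     (\<forall>n. \<forall>p\<in>P. \<forall>q\<in>P. len (Suc n) q p \<longrightarrow> len n q p) \<and>
     (\<forall>ps :: nat \<Rightarrow> 'a. (\<forall>n. ps n \<in> P) \<longrightarrow> (\<forall>n. len n (ps (Suc n)) (ps n)) \<longrightarrow>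
        (\<exists>q\<in>P. \<forall>n. len n q (ps n))) \<and>
     (\<forall>A. antichain P le A \<longrightarrow> (\<forall>p\<in>P. \<forall>n. \<exists>q\<in>P. len n q p \<and>
        countable {a\<in>A. compatible P le q a}))"

text \<open>Nodes of 3^{<omega} are lists of naturals with entries < 3.\<close>

definition is_tree :: "nat list set \<Rightarrow> bool" where
  "is_tree p \<longleftrightarrow> p \<noteq> {} \<and> (\<forall>t\<in>p. set t \<subseteq> {0,1,2}) \<and>
     (\<forall>t\<in>p. \<forall>s. prefix s t \<longrightarrow> s \<in> p)"

definition splitting :: "nat list set \<Rightarrow> nat list \<Rightarrow> bool" where
  "splitting p t \<longleftrightarrow> t \<in> p \<and> (\<exists>i j. i \<noteq> j \<and> t @ [i] \<in> p \<and> t @ [j] \<in> p)"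

definition perfect_tree :: "nat list set \<Rightarrow> bool" where
  "perfect_tree p \<longleftrightarrow> is_tree p \<and> (\<forall>s\<in>p. \<exists>t. prefix s t \<and> splitting p t)"

definition stem :: "nat list set \<Rightarrow> nat list" where
  "stem p = (THE s. s \<in> p \<and> (\<forall>t\<in>p. prefix s t \<or> prefix t s) \<and>
       (\<forall>s'\<in>p. (\<forall>t\<in>p. prefix s' t \<or> prefix t s') \<longrightarrow> length s' \<le> length s))"

definition T_cond :: "nat list set \<Rightarrow> nat set \<Rightarrow> bool" where
  "T_cond p A \<longleftrightarrow> perfect_tree p \<and>
     (\<forall>t\<in>p. length t \<in> A \<longleftrightarrow> splitting p t) \<and>
     (\<forall>t. splitting p t \<longrightarrow> (\<forall>i<3. t @ [i] \<in> p)) \<and>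
     (\<forall>s\<in>p. prefix (stem p) s \<longrightarrow> \<not> splitting p s \<longrightarrow> s @ [2] \<notin> p) \<and>
     (\<forall>s\<in>p. \<forall>t\<in>p. \<not> splitting p s \<longrightarrow> \<not> splitting p t \<longrightarrow> length s = length t \<longrightarrow>
        (\<forall>i<2. s @ [i] \<in> p \<longleftrightarrow> t @ [i] \<in> p))"

definition TT :: "(nat list set \<times> nat set) set" where
  "TT = {(p, A). T_cond p A}"

definition TT_le :: "(nat list set \<times> nat set) \<Rightarrow> (nat list set \<times> nat set) \<Rightarrow> bool" where
  "TT_le q p \<longleftrightarrow> fst q \<subseteq> fst p"

definition TT_len :: "nat \<Rightarrow> (nat list set \<times> nat set) \<Rightarrow> (nat list set \<times> nat set) \<Rightarrow> bool" where
  "TT_len n q p \<longleftrightarrow> TT_le q p \<and> (\<forall>i\<le>n. enumerate (snd q) i = enumerate (snd p) i)"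

end

theory Submission
  imports Defs
begin

definition allowed :: "nat list \<Rightarrow> nat set \<Rightarrow> (nat \<Rightarrow> nat) \<Rightarrow> nat \<Rightarrow> nat \<Rightarrow> bool" where
  "allowed s A e k x \<longleftrightarrow> (if k < length s then x = s!k else if k \<in> A then x < 3 else x = e k)"

definition gen :: "nat list \<Rightarrow> nat set \<Rightarrow> (nat \<Rightarrow> nat) \<Rightarrow> nat list set" where
  "gen s A e = {w. \<forall>k<length w. allowed s A e k (w!k)}"

definition valid :: "nat list \<Rightarrow> nat set \<Rightarrow> (nat \<Rightarrow> nat) \<Rightarrow> bool" where
  "valid s A e \<longleftrightarrow> infinite A \<and> length s \<in> A \<and> (\<forall>k\<in>A. length s \<le> k) \<and>
     (\<forall>k<length s. s!k < 3) \<and> (\<forall>k. e k < 2)"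

definition pick :: "nat list \<Rightarrow> nat set \<Rightarrow> (nat \<Rightarrow> nat) \<Rightarrow> nat \<Rightarrow> nat" where
  "pick s A e k = (if k < length s then s!k else if k \<in> A then 0 else e k)"

lemma allowed_pick: "allowed s A e k (pick s A e k)"
  by (simp add: allowed_def pick_def)

lemma allowed_lt3: "valid s A e \<Longrightarrow> allowed s A e k x \<Longrightarrow> x < 3"
  unfolding valid_def allowed_def by (auto split: if_splits dest: less_trans[OF _ less_trans[OF _ numeral_less_iff[THEN iffD2]]]) (metis less_trans numeral_less_iff semiring_norm(77) less_numeral_extra(4) Suc_1 eval_nat_numeral(3) lessI)

lemma gen_snoc: "t @ [i] \<in> gen s A e \<longleftrightarrow> t \<in> gen s A e \<and> allowed s A e (length t) i"
  unfolding gen_def by (auto simp: nth_append less_Suc_eq)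

lemma gen_Nil[simp]: "[] \<in> gen s A e"
  unfolding gen_def by simp

lemma gen_prefix: "w \<in> gen s A e \<Longrightarrow> prefix v w \<Longrightarrow> v \<in> gen s A e"
  unfolding gen_def prefix_def by (auto simp: nth_append) (metis trans_less_add1)

lemma gen_take: "w \<in> gen s A e \<Longrightarrow> take n w \<in> gen s A e"
  using gen_prefix take_is_prefix by blast

lemma map_pick_in: "map (pick s A e) [0..<n] \<in> gen s A e"
  unfolding gen_def by (simp add: allowed_pick)

lemma gen_append_pick:
  assumes "w \<in> gen s A e"
  shows "w @ map (pick s A e) [length w..<m] \<in> gen s A e"
  using assms unfolding gen_def
  by (auto simp: nth_append allowed_pick)

lemma gen_s: "valid s A e \<Longrightarrow> s \<in> gen s A e"
  unfolding gen_def allowed_def by simp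

lemma gen_prefix_s: "w \<in> gen s A e \<Longrightarrow> length w \<le> length s \<Longrightarrow> prefix w s"
proof -
  assume a: "w \<in> gen s A e" "length w \<le> length s"
  have "take (length w) s = w"
    using a unfolding gen_def allowed_def
    by (intro nth_equalityI) auto
  thus ?thesis by (metis take_is_prefix)
qed

lemma gen_s_prefix: "w \<in> gen s A e \<Longrightarrow> length s \<le> length w \<Longrightarrow> prefix s w"
proof -
  assume a: "w \<in> gen s A e" "length s \<le> length w"
  have "take (length s) w = s"
    using a unfolding gen_def allowed_def
    by (intro nth_equalityI) auto
  thus ?thesis by (metis take_is_prefix)
qed

lemma prefix_len_eq: "prefix xs ys \<Longrightarrow> length xs = length ys \<Longrightarrow> xs = ys"
  by (auto simp: prefix_def)

lemma stem_eq:
  assumes sp: "s \<in> p" and cmp: "\<forall>t\<in>p. prefix s t \<or> prefix t s"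
    and ch: "s @ [i] \<in> p" "s @ [j] \<in> p" "i \<noteq> j"
  shows "stem p = s"
proof -
  have maxl: "length s' \<le> length s" if s': "s' \<in> p" and c': "\<forall>t\<in>p. prefix s' t \<or> prefix t s'" for s'
  proof (rule ccontr)
    assume "\<not> length s' \<le> length s"
    hence lt: "length s < length s'" by simp
    have "prefix s s' \<or> prefix s' s" using cmp s' by blast
    hence "prefix s s'" using lt prefix_length_le by fastforce
    then obtain zs where zs: "s' = s @ zs" by (auto simp: prefix_def)
    have "zs \<noteq> []" using lt zs by auto
    then obtain z zs' where s'eq: "s' = s @ z # zs'" using zs by (metis neq_Nil_conv)
    have ci: "prefix s' (s @ [i]) \<or> prefix (s @ [i]) s'" using c' ch(1) by blast
    have cj: "prefix s' (s @ [j]) \<or> prefix (s @ [j]) s'" using c' ch(2) by blast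
    have "i = z" using ci unfolding s'eq by auto
    moreover have "j = z" using cj unfolding s'eq by auto
    ultimately show False using ch(3) by simp
  qed
  show ?thesis
    unfolding stem_def
  proof (rule the_equality)
    show "s \<in> p \<and> (\<forall>t\<in>p. prefix s t \<or> prefix t s) \<and>
      (\<forall>s'\<in>p. (\<forall>t\<in>p. prefix s' t \<or> prefix t s') \<longrightarrow> length s' \<le> length s)"
      using sp cmp maxl by blast
  next
    fix x assume x: "x \<in> p \<and> (\<forall>t\<in>p. prefix x t \<or> prefix t x) \<and>
      (\<forall>s'\<in>p. (\<forall>t\<in>p. prefix s' t \<or> prefix t s') \<longrightarrow> length s' \<le> length x)"
    have "length s \<le> length x" using x sp cmp by blast
    moreover have "length x \<le> length s" using x maxl by blast
    moreover have "prefix x s \<or> prefix s x" using x sp by blast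
    ultimately show "x = s" using prefix_len_eq by (metis le_antisym)
  qed
qed

lemma gen_splitting:
  assumes v: "valid s A e"
  shows "splitting (gen s A e) t \<longleftrightarrow> t \<in> gen s A e \<and> length t \<in> A"
proof
  assume "splitting (gen s A e) t"
  then obtain i j where ij: "t \<in> gen s A e" "i \<noteq> j" "allowed s A e (length t) i" "allowed s A e (length t) j"
    unfolding splitting_def gen_snoc by blast
  thus "t \<in> gen s A e \<and> length t \<in> A" unfolding allowed_def by (auto split: if_splits)
next
  assume a: "t \<in> gen s A e \<and> length t \<in> A"
  hence "\<not> length t < length s" using v unfolding valid_def by auto
  hence "allowed s A e (length t) 0" "allowed s A e (length t) 1" using a unfolding allowed_def by auto
  thus "splitting (gen s A e) t" unfolding splitting_def gen_snoc using a
    by (metis zero_neq_one)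
qed

lemma gen_T_cond:
  assumes v: "valid s A e"
  shows "T_cond (gen s A e) A"
proof -
  let ?G = "gen s A e"
  have vv: "infinite A" "length s \<in> A" "\<forall>k\<in>A. length s \<le> k" "\<forall>k. e k < 2"
    using v unfolding valid_def by auto
  have tree: "is_tree ?G"
    unfolding is_tree_def
  proof (intro conjI ballI allI impI)
    show "?G \<noteq> {}" using gen_Nil by blast
  next
    fix t assume t: "t \<in> ?G"
    show "set t \<subseteq> {0,1,2}"
    proof
      fix x assume "x \<in> set t"
      then obtain k where "k < length t" "t!k = x" by (metis in_set_conv_nth)
      hence "x < 3" using t allowed_lt3[OF v] unfolding gen_def by blast
      thus "x \<in> {0,1,2}" by auto
    qed
  next
    fix t s' assume "t \<in> ?G" "prefix s' t" thus "s' \<in> ?G" using gen_prefix by blast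
  qed
  have perfect: "perfect_tree ?G"
    unfolding perfect_tree_def
  proof (intro conjI tree ballI)
    fix t assume t: "t \<in> ?G"
    obtain m where m: "m \<in> A" "length t \<le> m" using vv(1) infinite_nat_iff_unbounded_le by blast
    let ?t = "t @ map (pick s A e) [length t..<m]"
    have "?t \<in> ?G" using gen_append_pick[OF t] .
    moreover have "length ?t = m" using m by simp
    ultimately have "splitting ?G ?t" using gen_splitting[OF v] m by simp
    moreover have "prefix t ?t" by simp
    ultimately show "\<exists>t'. prefix t t' \<and> splitting ?G t'" by blast
  qed
  have stem: "stem ?G = s"
  proof (rule stem_eq[where i=0 and j=1])
    show "s \<in> ?G" using gen_s[OF v] .
    show "\<forall>t\<in>?G. prefix s t \<or> prefix t s" using gen_prefix_s gen_s_prefix by (meson nat_le_linear)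
    have "\<not> length s < length s" by simp
    thus "s @ [0] \<in> ?G" "s @ [1] \<in> ?G" using gen_s[OF v] vv(2) by (auto simp: gen_snoc allowed_def)
  qed simp
  show ?thesis
    unfolding T_cond_def
  proof (intro conjI perfect ballI allI impI)
    fix t assume "t \<in> ?G" thus "length t \<in> A \<longleftrightarrow> splitting ?G t" using gen_splitting[OF v] by blast
  next
    fix t i assume "splitting ?G t" "i < (3::nat)"
    hence "t \<in> ?G" "length t \<in> A" using gen_splitting[OF v] by auto
    moreover hence "\<not> length t < length s" using vv(3) by auto
    ultimately show "t @ [i] \<in> ?G" using \<open>i < 3\<close> by (auto simp: gen_snoc allowed_def)
  next
    fix t assume t: "t \<in> ?G" "prefix (stem ?G) t" "\<not> splitting ?G t"
    hence "length t \<notin> A" "\<not> length t < length s" using gen_splitting[OF v] stem prefix_length_le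
      by (auto simp: not_less)
    thus "t @ [2] \<notin> ?G" using vv(4) by (auto simp: gen_snoc allowed_def) (metis less_not_refl)
  next
    fix s1 t1 i assume a: "s1 \<in> ?G" "t1 \<in> ?G" "\<not> splitting ?G s1" "\<not> splitting ?G t1"
      "length s1 = length t1" "i < (2::nat)"
    thus "s1 @ [i] \<in> ?G \<longleftrightarrow> t1 @ [i] \<in> ?G" by (simp add: gen_snoc)
  qed
qed

lemma T_cond_gen:
  assumes T: "T_cond p A"
  shows "\<exists>s e. valid s A e \<and> p = gen s A e"
proof -
  note Tc = T[unfolded T_cond_def]
  have perf: "perfect_tree p" using Tc by (rule conjunct1)
  have lev: "\<forall>t\<in>p. length t \<in> A \<longleftrightarrow> splitting p t" using Tc[THEN conjunct2] by (rule conjunct1)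
  have full: "\<forall>t. splitting p t \<longrightarrow> (\<forall>i<3. t @ [i] \<in> p)"
    using Tc[THEN conjunct2, THEN conjunct2] by (rule conjunct1)
  have no2: "\<forall>s\<in>p. prefix (stem p) s \<longrightarrow> \<not> splitting p s \<longrightarrow> s @ [2] \<notin> p"
    using Tc[THEN conjunct2, THEN conjunct2, THEN conjunct2] by (rule conjunct1)
  have unif: "\<forall>s\<in>p. \<forall>t\<in>p. \<not> splitting p s \<longrightarrow> \<not> splitting p t \<longrightarrow> length s = length t \<longrightarrow>
        (\<forall>i<2. s @ [i] \<in> p \<longleftrightarrow> t @ [i] \<in> p)"
    using Tc[THEN conjunct2, THEN conjunct2, THEN conjunct2] by (rule conjunct2)
  note Pc = perf[unfolded perfect_tree_def]
  have tree: "is_tree p" using Pc by (rule conjunct1)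
  have ext: "\<forall>s\<in>p. \<exists>t. prefix s t \<and> splitting p t" using Pc by (rule conjunct2)
  note Ic = tree[unfolded is_tree_def]
  have ne: "p \<noteq> {}" using Ic by (rule conjunct1)
  have ent: "\<forall>t\<in>p. set t \<subseteq> {0,1,2}" using Ic[THEN conjunct2] by (rule conjunct1)
  have pc: "\<forall>t\<in>p. \<forall>s. prefix s t \<longrightarrow> s \<in> p" using Ic[THEN conjunct2] by (rule conjunct2)
  have nil: "[] \<in> p"
  proof -
    obtain t where "t \<in> p" using ne by blast
    thus ?thesis using pc Nil_prefix by blast
  qed
  have child: "\<exists>i. t @ [i] \<in> p" if t: "t \<in> p" for t
  proof -
    obtain t' where t': "prefix t t'" "splitting p t'" using ext t by blast
    show ?thesis
    proof (cases "t' = t")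
      case True thus ?thesis using t' unfolding splitting_def by blast
    next
      case False
      hence "length t < length t'" using t' prefix_len_eq prefix_length_le by (metis le_neq_implies_less)
      moreover obtain zs where zs: "t' = t @ zs" using t'(1) by (auto simp: prefix_def)
      ultimately obtain z zs' where "t' = t @ z # zs'" by (cases zs) auto
      hence "prefix (t @ [z]) t'" by simp
      moreover have "t' \<in> p" using t' unfolding splitting_def by blast
      ultimately show ?thesis using pc by blast
    qed
  qed
  have levels: "\<exists>t\<in>p. length t = k" for k
  proof (induction k)
    case 0 thus ?case using nil by auto
  next
    case (Suc k)
    then obtain t where "t \<in> p" "length t = k" by blast
    moreover then obtain i where "t @ [i] \<in> p" using child by blast
    ultimately show ?case by (intro bexI[of _ "t @ [i]"]) auto
  qed
  have unb: "\<exists>m\<in>A. k \<le> m" for k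
  proof -
    obtain t where t: "t \<in> p" "length t = k" using levels by blast
    obtain t' where t': "prefix t t'" "splitting p t'" using ext t by blast
    have "t' \<in> p" using t' unfolding splitting_def by blast
    hence "length t' \<in> A" using lev t' by blast
    thus ?thesis using t' t prefix_length_le by blast
  qed
  have infA: "infinite A" unfolding infinite_nat_iff_unbounded_le using unb by blast
  define m0 where "m0 = (LEAST m. m \<in> A)"
  have m0A: "m0 \<in> A" unfolding m0_def using unb by (meson LeastI)
  have m0le: "\<forall>k\<in>A. m0 \<le> k" unfolding m0_def by (simp add: Least_le)
  have nonsplit_child: "x = y" if "t \<in> p" "\<not> splitting p t" "t @ [x] \<in> p" "t @ [y] \<in> p" for t x y
    using that unfolding splitting_def by blast
  have uniq: "\<forall>t1\<in>p. \<forall>t2\<in>p. length t1 = k \<longrightarrow> length t2 = k \<longrightarrow> t1 = t2" if "k \<le> m0" for k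
    using that
  proof (induction k)
    case 0 thus ?case by auto
  next
    case (Suc k)
    show ?case
    proof (intro ballI impI)
      fix t1 t2 assume t: "t1 \<in> p" "t2 \<in> p" "length t1 = Suc k" "length t2 = Suc k"
      obtain u1 x1 where u1: "t1 = u1 @ [x1]" using t(3) by (metis length_Suc_conv_rev)
      obtain u2 x2 where u2: "t2 = u2 @ [x2]" using t(4) by (metis length_Suc_conv_rev)
      have "u1 \<in> p" "u2 \<in> p" using t u1 u2 pc by auto
      moreover have "length u1 = k" "length u2 = k" using t u1 u2 by auto
      ultimately have "u1 = u2" using Suc by auto
      moreover have "\<not> splitting p u1"
      proof
        assume "splitting p u1"
        hence "k \<in> A" using lev \<open>u1 \<in> p\<close> \<open>length u1 = k\<close> by blast
        thus False using m0le Suc.prems by fastforce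
      qed
      ultimately show "t1 = t2" using nonsplit_child \<open>u1 \<in> p\<close> t u1 u2 by blast
    qed
  qed
  obtain s where s: "s \<in> p" "length s = m0" using levels by blast
  have cmp: "prefix t s \<or> prefix s t" if t: "t \<in> p" for t
  proof (cases "length t \<le> m0")
    case True
    have "take (length t) s \<in> p" using s pc take_is_prefix by blast
    hence "take (length t) s = t" using uniq[OF True] t True s by auto
    thus ?thesis by (metis take_is_prefix)
  next
    case False
    have "take m0 t \<in> p" using t pc take_is_prefix by blast
    hence "take m0 t = s" using uniq[of m0] s False by auto
    thus ?thesis by (metis take_is_prefix)
  qed
  have ssplit: "splitting p s" using lev s m0A by blast
  hence s012: "\<forall>i<3. s @ [i] \<in> p" using full by blast
  have stem: "stem p = s"
    by (rule stem_eq[where i=0 and j=1]) (use s cmp s012 in auto)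
  define e where "e k = (if \<exists>t\<in>p. length t = k \<and> \<not> splitting p t \<and> t @ [1] \<in> p then 1 else (0::nat))" for k
  have e2: "\<forall>k. e k < 2" unfolding e_def by auto
  have ekey: "t @ [x] \<in> p \<longleftrightarrow> x = e (length t)"
    if t: "t \<in> p" "m0 \<le> length t" "length t \<notin> A" for t x
  proof -
    have ns: "\<not> splitting p t" using lev t by blast
    obtain c where c: "t @ [c] \<in> p" using child t by blast
    have "c \<in> {0,1,2}" using ent c by auto
    moreover have "prefix s t" using cmp t s prefix_length_le
      by (metis prefix_len_eq le_antisym)
    hence "c \<noteq> 2" using no2 stem t ns c by auto
    ultimately have c01: "c = 0 \<or> c = 1" by auto
    have ec: "e (length t) = c"
    proof (cases "\<exists>t'\<in>p. length t' = length t \<and> \<not> splitting p t' \<and> t' @ [1] \<in> p")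
      case True
      then obtain t' where "t' \<in> p" "length t' = length t" "\<not> splitting p t'" "t' @ [1] \<in> p" by blast
      hence "t @ [1] \<in> p" using unif t ns by (metis one_less_numeral_iff semiring_norm(76))
      hence "c = 1" using nonsplit_child t ns c by blast
      thus ?thesis using True unfolding e_def by simp
    next
      case False
      hence "c \<noteq> 1" using t ns c by blast
      hence "c = 0" using c01 by blast
      thus ?thesis using False unfolding e_def by simp
    qed
    show ?thesis using nonsplit_child t ns c ec by blast
  qed
  have sent: "\<forall>k<length s. s!k < 3"
  proof (intro allI impI)
    fix k assume "k < length s"
    hence "s!k \<in> set s" by simp
    hence "s!k \<in> {0,1,2}" using ent s by blast
    thus "s!k < 3" by auto
  qed
  have valid: "valid s A e" unfolding valid_def using infA m0A m0le s sent e2 by auto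
  have "p = gen s A e"
  proof (intro set_eqI iffI)
    fix w assume w: "w \<in> p"
    show "w \<in> gen s A e" unfolding gen_def
    proof (intro CollectI allI impI)
      fix k assume k: "k < length w"
      have tk: "take k w \<in> p" "take (Suc k) w \<in> p" using w pc take_is_prefix by blast+
      have tk1: "take (Suc k) w = take k w @ [w!k]" using k by (simp add: take_Suc_conv_app_nth)
      have lk: "length (take k w) = k" using k by simp
      show "allowed s A e k (w!k)"
      proof (cases "k < length s")
        case True
        have c2: "prefix (take (Suc k) w) s \<or> prefix s (take (Suc k) w)" using cmp[OF tk(2)] .
        have l2: "length (take (Suc k) w) = Suc k" using k by simp
        have "prefix (take (Suc k) w) s"
        proof (cases "prefix (take (Suc k) w) s")
          case False
          hence ps: "prefix s (take (Suc k) w)" using c2 by blast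
          hence "length s \<le> Suc k" using l2 prefix_length_le by metis
          hence "length s = length (take (Suc k) w)" using True l2 by simp
          hence "s = take (Suc k) w" using ps prefix_len_eq by blast
          thus ?thesis by simp
        qed simp
        hence "s ! k = w ! k" using tk1 lk by (auto simp: prefix_def nth_append)
        thus ?thesis using True unfolding allowed_def by simp
      next
        case False
        show ?thesis
        proof (cases "k \<in> A")
          case True
          have "w!k \<in> set w" using k by simp
          hence "w!k \<in> {0,1,2}" using ent w by blast
          hence "w!k < 3" by auto
          thus ?thesis using True False unfolding allowed_def by simp
        next
          case kA: False
          have "w!k = e k" using ekey[OF tk(1)] tk(2) tk1 lk kA False s by auto
          thus ?thesis using kA False unfolding allowed_def by simp
        qed
      qed
    qed
  next
    fix w assume "w \<in> gen s A e"
    thus "w \<in> p"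
    proof (induction w rule: rev_induct)
      case Nil thus ?case using nil by simp
    next
      case (snoc x w)
      have w: "w \<in> p" and al: "allowed s A e (length w) x" using snoc gen_snoc by blast+
      show ?case
      proof (cases "length w < length s")
        case True
        hence xs: "x = s ! length w" using al unfolding allowed_def by simp
        have "prefix w s" using cmp[OF w] True prefix_length_le by fastforce
        hence "take (length w) s = w" by (metis prefix_def append_eq_conv_conj)
        hence "take (Suc (length w)) s = w @ [x]" using True xs by (metis take_Suc_conv_app_nth)
        thus ?thesis using s pc take_is_prefix by metis
      next
        case False
        show ?thesis
        proof (cases "length w \<in> A")
          case True
          hence "splitting p w" using lev w by blast
          moreover have "x < 3" using al True False unfolding allowed_def by simp
          ultimately show ?thesis using full by blast
        next
          case nA: False
          have "x = e (length w)" using al nA False unfolding allowed_def by simp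
          thus ?thesis using ekey[OF w] False nA s by simp
        qed
      qed
    qed
  qed
  thus ?thesis using valid by blast
qed

lemma TT_iff: "(p, A) \<in> TT \<longleftrightarrow> (\<exists>s e. valid s A e \<and> p = gen s A e)"
  unfolding TT_def using T_cond_gen gen_T_cond by auto

lemma gen_subset_iff:
  "gen s' A' e' \<subseteq> gen s A e \<longleftrightarrow> (\<forall>k x. allowed s' A' e' k x \<longrightarrow> allowed s A e k x)"
proof
  assume sub: "gen s' A' e' \<subseteq> gen s A e"
  show "\<forall>k x. allowed s' A' e' k x \<longrightarrow> allowed s A e k x"
  proof (intro allI impI)
    fix k x assume ax: "allowed s' A' e' k x"
    let ?w = "map (pick s' A' e') [0..<k]"
    have "?w @ [x] \<in> gen s' A' e'" using map_pick_in ax by (simp add: gen_snoc)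
    hence "?w @ [x] \<in> gen s A e" using sub by blast
    thus "allowed s A e k x" by (simp add: gen_snoc)
  qed
next
  assume pw: "\<forall>k x. allowed s' A' e' k x \<longrightarrow> allowed s A e k x"
  show "gen s' A' e' \<subseteq> gen s A e" unfolding gen_def using pw by blast
qed

lemma allowed_full: "valid s A e \<Longrightarrow> (\<forall>x<3. allowed s A e k x) \<longleftrightarrow> k \<in> A"
proof
  assume "\<forall>x<3. allowed s A e k x"
  hence a0: "allowed s A e k 0" and a1: "allowed s A e k 1" by auto
  show "k \<in> A"
  proof (rule ccontr)
    assume "k \<notin> A"
    thus False using a0 a1 unfolding allowed_def by (auto split: if_splits)
  qed
next
  assume v: "valid s A e" and k: "k \<in> A"
  hence "\<not> k < length s" unfolding valid_def by auto
  thus "\<forall>x<3. allowed s A e k x" using k unfolding allowed_def by auto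
qed

lemma valid_enum0: "valid s A e \<Longrightarrow> enumerate A 0 = length s"
  unfolding valid_def by (auto simp: enumerate_0 intro!: Least_equality)

lemma valid_inf: "valid s A e \<Longrightarrow> infinite A"
  unfolding valid_def by blast

lemma enum_agree:
  fixes S S' :: "nat set"
  assumes inf: "infinite S" "infinite S'" and eq: "\<forall>j\<le>i. enumerate S j = enumerate S' j"
    and y: "y \<le> enumerate S i"
  shows "y \<in> S \<longleftrightarrow> y \<in> S'"
proof
  assume "y \<in> S"
  then obtain j where j: "enumerate S j = y" using enumerate_Ex inf by blast
  hence "enumerate S j \<le> enumerate S i" using y by simp
  hence "j \<le> i" using enumerate_mono_le_iff inf(1) by metis
  thus "y \<in> S'" using eq j enumerate_in_set inf by metis
next
  assume "y \<in> S'"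
  then obtain j where j: "enumerate S' j = y" using enumerate_Ex inf by blast
  have "y \<le> enumerate S' i" using y eq by simp
  hence "enumerate S' j \<le> enumerate S' i" using j by simp
  hence "j \<le> i" using enumerate_mono_le_iff inf(2) by metis
  thus "y \<in> S" using eq j enumerate_in_set inf by metis
qed

lemma least_agree:
  fixes S S' :: "nat set"
  assumes a: "a \<in> S" "P a" "\<forall>y. y \<in> S \<and> P y \<longrightarrow> a \<le> y" "a < L"
    and eq: "S \<inter> {..<L} = S' \<inter> {..<L}"
  shows "(LEAST x. x \<in> S' \<and> P x) = a"
proof (rule Least_equality)
  show "a \<in> S' \<and> P a" using a eq by blast
next
  fix y assume y: "y \<in> S' \<and> P y"
  show "a \<le> y"
  proof (rule ccontr)
    assume "\<not> a \<le> y"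
    hence "y < L" using a by simp
    hence "y \<in> S" using y eq by blast
    thus False using a y \<open>\<not> a \<le> y\<close> by blast
  qed
qed

lemma enum_agree2:
  fixes S S' :: "nat set"
  assumes inf: "infinite S" "infinite S'" and eq: "S \<inter> {..<L} = S' \<inter> {..<L}"
  shows "enumerate S j < L \<Longrightarrow> enumerate S' j = enumerate S j"
proof (induction j)
  case 0
  have "(LEAST x. x \<in> S' \<and> True) = enumerate S 0"
  proof (rule least_agree[OF _ _ _ 0 eq])
    show "enumerate S 0 \<in> S" using enumerate_in_set inf by blast
    show "\<forall>y. y \<in> S \<and> True \<longrightarrow> enumerate S 0 \<le> y" by (simp add: enumerate_0 Least_le)
  qed simp
  thus ?case by (simp add: enumerate_0)
next
  case (Suc j)
  have lt: "enumerate S j < L" using Suc.prems enumerate_step[OF inf(1), of j] by simp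
  hence ih: "enumerate S' j = enumerate S j" using Suc.IH by blast
  have "(LEAST x. x \<in> S' \<and> enumerate S j < x) = enumerate S (Suc j)"
  proof (rule least_agree[OF _ _ _ Suc.prems eq])
    show "enumerate S (Suc j) \<in> S" using enumerate_in_set inf by blast
    show "enumerate S j < enumerate S (Suc j)" using enumerate_step inf by blast
    show "\<forall>y. y \<in> S \<and> enumerate S j < y \<longrightarrow> enumerate S (Suc j) \<le> y"
      using enumerate_Suc''[OF inf(1)] by (simp add: Least_le)
  qed
  thus ?case using enumerate_Suc''[OF inf(2)] ih by simp
qed

lemma enumerate_range_sm:
  fixes c :: "nat \<Rightarrow> nat"
  assumes sm: "strict_mono c"
  shows "enumerate (range c) i = c i"
proof -
  have inf: "infinite (range c)"
    using sm strict_mono_imp_inj_on range_inj_infinite by blast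
  show ?thesis
  proof (induction i)
    case 0
    show ?case unfolding enumerate_0
      by (rule Least_equality) (auto simp: strict_mono_less_eq[OF sm])
  next
    case (Suc i)
    have "(LEAST s. s \<in> range c \<and> enumerate (range c) i < s) = c (Suc i)"
    proof (rule Least_equality)
      show "c (Suc i) \<in> range c \<and> enumerate (range c) i < c (Suc i)"
        using Suc sm by (simp add: strict_mono_less)
    next
      fix y assume "y \<in> range c \<and> enumerate (range c) i < y"
      then obtain j where "y = c j" "c i < c j" using Suc by auto
      hence "i < j" using strict_mono_less[OF sm] by blast
      thus "c (Suc i) \<le> y" using \<open>y = c j\<close> strict_mono_less_eq[OF sm] by simp
    qed
    thus ?case using enumerate_Suc''[OF inf] by simp
  qed
qed

lemma TT_E: "c \<in> TT \<Longrightarrow> \<exists>s e. valid s (snd c) e \<and> fst c = gen s (snd c) e"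
  using TT_iff[of "fst c" "snd c"] by simp

lemma TT_I: "valid s A e \<Longrightarrow> (gen s A e, A) \<in> TT"
  using TT_iff by blast

lemma fusion:
  assumes P: "\<forall>n. ps n \<in> TT" and ch: "\<forall>n. TT_len n (ps (Suc n)) (ps n)"
  shows "\<exists>q\<in>TT. \<forall>n. TT_len n q (ps n)"
proof -
  define Bs where "Bs n = snd (ps n)" for n
  have "\<forall>n. \<exists>s e. valid s (Bs n) e \<and> fst (ps n) = gen s (Bs n) e"
    using P TT_E unfolding Bs_def by blast
  then obtain S E where SE: "\<And>n. valid (S n) (Bs n) (E n)" "\<And>n. fst (ps n) = gen (S n) (Bs n) (E n)"
    by metis
  have inf: "\<And>n. infinite (Bs n)" using SE valid_inf by blast
  let ?al = "\<lambda>n. allowed (S n) (Bs n) (E n)"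
  have step1: "?al (Suc m) k x \<Longrightarrow> ?al m k x" for m k x
  proof -
    have "fst (ps (Suc m)) \<subseteq> fst (ps m)" using ch unfolding TT_len_def TT_le_def by blast
    thus "?al (Suc m) k x \<Longrightarrow> ?al m k x" using SE(2) gen_subset_iff by metis
  qed
  have mono: "m \<le> m' \<Longrightarrow> ?al m' k x \<Longrightarrow> ?al m k x" for m m' k x
  proof (induction m' rule: dec_induct)
    case base thus ?case by simp
  next
    case (step m') thus ?case using step1 by blast
  qed
  have en: "m \<ge> i \<Longrightarrow> enumerate (Bs m) i = enumerate (Bs i) i" for m i
  proof (induction m rule: dec_induct)
    case base thus ?case by simp
  next
    case (step m)
    have "enumerate (Bs (Suc m)) i = enumerate (Bs m) i"
      using ch step.hyps unfolding TT_len_def Bs_def by auto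
    thus ?case using step.IH by simp
  qed
  have lenS: "length (S m) = length (S 0)" for m
    using en[of 0 m] valid_enum0[OF SE(1)] by (metis le0)
  have Seq: "S m = S 0" for m
  proof (rule nth_equalityI)
    show "length (S m) = length (S 0)" by (rule lenS)
  next
    fix k assume k: "k < length (S m)"
    have "?al m k (S m ! k)" using k unfolding allowed_def by simp
    hence "?al 0 k (S m ! k)" using mono[of 0 m] by blast
    moreover have "k < length (S 0)" using k lenS[of m] by simp
    ultimately show "S m ! k = S 0 ! k" unfolding allowed_def by simp
  qed
  define s where "s = S 0"
  have stab: "m \<ge> Suc k \<Longrightarrow> (k \<in> Bs m \<longleftrightarrow> k \<in> Bs (Suc k))" for m k
  proof -
    assume m: "m \<ge> Suc k"
    have "\<forall>j\<le>Suc k. enumerate (Bs m) j = enumerate (Bs (Suc k)) j"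
      using en m by (metis le_trans)
    moreover have "k \<le> enumerate (Bs m) (Suc k)" using le_enumerate[OF inf] by (metis Suc_leD)
    ultimately show ?thesis using enum_agree[OF inf inf] by blast
  qed
  have stab2: "m \<ge> Suc k \<Longrightarrow> ?al m k x \<longleftrightarrow> ?al (Suc k) k x" for m k x
  proof
    assume "m \<ge> Suc k" "?al m k x" thus "?al (Suc k) k x" using mono by blast
  next
    assume m: "m \<ge> Suc k" and a: "?al (Suc k) k x"
    have SS: "S m = s" "S (Suc k) = s" using Seq s_def by auto
    show "?al m k x"
    proof (cases "k < length s")
      case True thus ?thesis using a SS unfolding allowed_def by simp
    next
      case False
      show ?thesis
      proof (cases "k \<in> Bs (Suc k)")
        case True thus ?thesis using a SS False stab[OF m] unfolding allowed_def by simp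
      next
        case nk: False
        have "?al m k (E m k)" using SS False nk stab[OF m] unfolding allowed_def by simp
        hence "?al (Suc k) k (E m k)" using mono m by blast
        hence "E m k = E (Suc k) k" using SS False nk unfolding allowed_def by simp
        thus ?thesis using a SS False nk stab[OF m] unfolding allowed_def by simp
      qed
    qed
  qed
  define Binf where "Binf = {k. k \<in> Bs (Suc k)}"
  define Einf where "Einf k = E (Suc k) k" for k
  have alinf: "allowed s Binf Einf k x \<longleftrightarrow> ?al (Suc k) k x" for k x
    unfolding allowed_def Binf_def Einf_def using Seq[of "Suc k"] s_def by simp
  define c where "c i = enumerate (Bs i) i" for i
  have sm: "strict_mono c"
    unfolding strict_mono_Suc_iff
  proof
    fix i
    have "c i = enumerate (Bs (Suc i)) i" using en[of i "Suc i"] c_def by simp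
    also have "\<dots> < enumerate (Bs (Suc i)) (Suc i)" using enumerate_step inf by blast
    finally show "c i < c (Suc i)" using c_def by simp
  qed
  have rng: "Binf = range c"
  proof (intro set_eqI iffI)
    fix k assume "k \<in> Binf"
    hence k: "k \<in> Bs (Suc k)" unfolding Binf_def by simp
    then obtain j where j: "enumerate (Bs (Suc k)) j = k" using enumerate_Ex inf by blast
    hence "j \<le> k" using le_enumerate[OF inf] by metis
    hence "c j = k" using en[of j "Suc k"] j c_def by simp
    thus "k \<in> range c" by blast
  next
    fix k assume "k \<in> range c"
    then obtain i where i: "k = c i" by blast
    have "i \<le> c i" using le_enumerate[OF inf] c_def by simp
    hence "c i = enumerate (Bs (Suc (c i))) i" using en[of i "Suc (c i)"] c_def by simp
    hence "c i \<in> Bs (Suc (c i))" using enumerate_in_set inf by metis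
    thus "k \<in> Binf" using i Binf_def by simp
  qed
  have enInf: "enumerate Binf i = c i" for i using rng enumerate_range_sm[OF sm] by simp
  have vS: "valid s (Bs 0) (E 0)" using SE(1) s_def by simp
  have valid: "valid s Binf Einf"
    unfolding valid_def
  proof (intro conjI ballI allI impI)
    have "inj c" using sm strict_mono_imp_inj_on by blast
    hence "infinite (range c)" by (rule range_inj_infinite)
    thus "infinite Binf" using rng by simp
    have "c 0 = length s" using c_def valid_enum0[OF vS] by simp
    thus "length s \<in> Binf" using rng by (metis rangeI)
  next
    fix k assume "k \<in> Binf"
    hence "k \<in> Bs (Suc k)" unfolding Binf_def by simp
    moreover have "S (Suc k) = s" using Seq s_def by simp
    ultimately show "length s \<le> k" using SE(1)[of "Suc k"] unfolding valid_def by simp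
  next
    fix k assume "k < length s" thus "s ! k < 3" using vS unfolding valid_def by blast
  next
    fix k have "valid (S (Suc k)) (Bs (Suc k)) (E (Suc k))" by (rule SE(1))
    thus "Einf k < 2" unfolding Einf_def valid_def by blast
  qed
  have "\<forall>n. TT_len n (gen s Binf Einf, Binf) (ps n)"
  proof
    fix n
    have "gen s Binf Einf \<subseteq> gen (S n) (Bs n) (E n)"
      unfolding gen_subset_iff
    proof (intro allI impI)
      fix k x assume "allowed s Binf Einf k x"
      hence a: "?al (Suc k) k x" using alinf by blast
      show "?al n k x"
      proof (cases "n \<le> Suc k")
        case True thus ?thesis using mono a by blast
      next
        case False
        hence "n \<ge> Suc k" by simp
        thus ?thesis using stab2[of k n x] a by blast
      qed
    qed
    hence "TT_le (gen s Binf Einf, Binf) (ps n)" unfolding TT_le_def using SE(2) by simp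
    moreover have "\<forall>i\<le>n. enumerate Binf i = enumerate (snd (ps n)) i"
    proof (intro allI impI)
      fix i assume "i \<le> n"
      hence "enumerate (Bs n) i = c i" using en[of i n] c_def by simp
      thus "enumerate Binf i = enumerate (snd (ps n)) i" using enInf[of i] Bs_def by simp
    qed
    ultimately show "TT_len n (gen s Binf Einf, Binf) (ps n)" unfolding TT_len_def by simp
  qed
  moreover have "(gen s Binf Einf, Binf) \<in> TT" using TT_I[OF valid] .
  ultimately show ?thesis by blast
qed

type_synonym cnd = "nat list set \<times> nat set"

lemma TT_prefix: "a \<in> TT \<Longrightarrow> w \<in> fst a \<Longrightarrow> prefix u w \<Longrightarrow> u \<in> fst a"
  using TT_E gen_prefix by metis

lemma infinite_ge: "infinite (B::nat set) \<Longrightarrow> infinite {k\<in>B. L \<le> k}"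
proof -
  assume "infinite B"
  moreover have "{k\<in>B. L \<le> k} = B - {..<L}" by auto
  ultimately show ?thesis by (simp add: Diff_infinite_finite)
qed

lemma cone_compat:
  assumes r: "r \<in> TT" and v: "v \<in> fst r" and a: "a1 \<in> TT" "a2 \<in> TT"
    and c1: "\<forall>w\<in>fst r. prefix v w \<longrightarrow> w \<in> fst a1"
    and c2: "\<forall>w\<in>fst r. prefix v w \<longrightarrow> w \<in> fst a2"
  shows "compatible TT TT_le a1 a2"
proof -
  obtain s e where se: "valid s (snd r) e" "fst r = gen s (snd r) e" using TT_E[OF r] by blast
  define B where "B = snd r"
  have inf: "infinite B" using se valid_inf B_def by blast
  define M where "M = enumerate B (length v)"
  have MB: "M \<in> B" using enumerate_in_set[OF inf] M_def by simp
  have Mv: "length v \<le> M" using le_enumerate[OF inf] M_def by simp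
  have Ms: "length s \<le> M" using MB se(1) B_def unfolding valid_def by blast
  define v' where "v' = v @ map (pick s B e) [length v..<M]"
  have vgen: "v \<in> gen s B e" using v se B_def by simp
  have v'gen: "v' \<in> gen s B e" using gen_append_pick[OF vgen] v'_def by simp
  have lv': "length v' = M" using Mv v'_def by simp
  have pv: "prefix v v'" using v'_def by simp
  define B'' where "B'' = {k\<in>B. M \<le> k}"
  have val: "valid v' B'' e"
    unfolding valid_def
  proof (intro conjI ballI allI impI)
    show "infinite B''" using infinite_ge[OF inf] B''_def by simp
    show "length v' \<in> B''" using lv' MB B''_def by simp
  next
    fix k assume "k \<in> B''" thus "length v' \<le> k" using lv' B''_def by simp
  next
    fix k assume "k < length v'"
    hence "allowed s B e k (v'!k)" using v'gen unfolding gen_def by blast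
    thus "v'!k < 3" using allowed_lt3 se(1) B_def by blast
  next
    fix k show "e k < 2" using se(1) unfolding valid_def by blast
  qed
  have sub: "gen v' B'' e \<subseteq> gen s B e"
    unfolding gen_subset_iff
  proof (intro allI impI)
    fix k x assume ax: "allowed v' B'' e k x"
    show "allowed s B e k x"
    proof (cases "k < M")
      case True
      hence "x = v'!k" using ax lv' unfolding allowed_def by simp
      moreover have "allowed s B e k (v'!k)" using v'gen True lv' unfolding gen_def by blast
      ultimately show ?thesis by simp
    next
      case False
      hence "\<not> k < length s" "\<not> k < length v'" "k \<in> B'' \<longleftrightarrow> k \<in> B" using Ms lv' B''_def by auto
      thus ?thesis using ax unfolding allowed_def by simp
    qed
  qed
  have inA: "w \<in> fst ai" if w: "w \<in> gen v' B'' e" and ai: "ai \<in> TT"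
    and ci: "\<forall>w\<in>fst r. prefix v w \<longrightarrow> w \<in> fst ai" for w ai
  proof -
    have wr: "w \<in> fst r" using w sub se B_def by auto
    show ?thesis
    proof (cases "length w \<le> M")
      case True
      hence "prefix w v'" using gen_prefix_s[OF w] lv' by simp
      hence "prefix w v \<or> prefix v w" using pv prefix_same_cases by blast
      thus ?thesis
      proof
        assume "prefix w v"
        moreover have "v \<in> fst ai" using ci v by simp
        ultimately show ?thesis using TT_prefix ai by blast
      next
        assume "prefix v w" thus ?thesis using ci wr by blast
      qed
    next
      case False
      hence "prefix v' w" using gen_s_prefix[OF w] lv' by simp
      hence "prefix v w" using pv by (metis prefix_order.trans)
      thus ?thesis using ci wr by blast
    qed
  qed
  have "(gen v' B'' e, B'') \<in> TT" using TT_I[OF val] .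
  moreover have "TT_le (gen v' B'' e, B'') a1" unfolding TT_le_def fst_conv using inA[OF _ a(1) c1] by blast
  moreover have "TT_le (gen v' B'' e, B'') a2" unfolding TT_le_def fst_conv using inA[OF _ a(2) c2] by blast
  ultimately show ?thesis unfolding compatible_def by blast
qed

definition opt :: "nat \<Rightarrow> nat list \<Rightarrow> cnd \<Rightarrow> cnd set \<Rightarrow> cnd \<Rightarrow> cnd \<Rightarrow> bool" where
  "opt L v st AC q' a \<longleftrightarrow> q' \<in> TT \<and> fst q' \<subseteq> fst st \<and> snd q' \<inter> {..<L} = snd st \<inter> {..<L} \<and>
     v \<in> fst q' \<and> a \<in> AC \<and> (\<forall>w\<in>fst q'. prefix v w \<longrightarrow> w \<in> fst a)"

lemma graft_opt:
  assumes st: "st \<in> TT" and r: "r \<in> TT" and sub: "fst r \<subseteq> fst st"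
    and v: "v \<in> fst r" "length v = L"
    and L1: "enumerate (snd r) 0 < L" and L2: "enumerate (snd st) 0 < L"
    and a: "a \<in> AC" "fst r \<subseteq> fst a"
  shows "\<exists>q' a'. opt L v st AC q' a'"
proof -
  obtain s' e' where se: "valid s' (snd st) e'" "fst st = gen s' (snd st) e'" using TT_E[OF st] by blast
  obtain sr er where sre: "valid sr (snd r) er" "fst r = gen sr (snd r) er" using TT_E[OF r] by blast
  define B' where "B' = snd st"
  define Br where "Br = snd r"
  have ls': "length s' < L" using L2 valid_enum0[OF se(1)] by simp
  have lsr: "length sr < L" using L1 valid_enum0[OF sre(1)] by simp
  have pw: "allowed sr Br er k x \<Longrightarrow> allowed s' B' e' k x" for k x
    using sub se(2) sre(2) gen_subset_iff B'_def Br_def by metis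
  define G where "G = {k\<in>B'. k < L} \<union> {k\<in>Br. L \<le> k}"
  define e'' where "e'' k = (if k < L then e' k else er k)" for k
  have alG: "allowed s' G e'' k x \<longleftrightarrow> (if k < L then allowed s' B' e' k x else allowed sr Br er k x)" for k x
  proof (cases "k < L")
    case True
    hence "k \<in> G \<longleftrightarrow> k \<in> B'" "e'' k = e' k" using G_def e''_def by auto
    thus ?thesis using True unfolding allowed_def by simp
  next
    case False
    hence "k \<in> G \<longleftrightarrow> k \<in> Br" "e'' k = er k" "\<not> k < length s'" "\<not> k < length sr"
      using G_def e''_def ls' lsr by auto
    thus ?thesis using False unfolding allowed_def by simp
  qed
  have vs': "valid s' B' e'" using se(1) B'_def by simp
  have vsr: "valid sr Br er" using sre(1) Br_def by simp
  have val: "valid s' G e''"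
    unfolding valid_def
  proof (intro conjI ballI allI impI)
    have "infinite {k\<in>Br. L \<le> k}" using infinite_ge valid_inf[OF vsr] by blast
    thus "infinite G" unfolding G_def by simp
    show "length s' \<in> G" using vs' ls' unfolding G_def valid_def by simp
  next
    fix k assume "k \<in> G"
    thus "length s' \<le> k" using vs' ls' unfolding G_def valid_def by auto
  next
    fix k assume "k < length s'" thus "s'!k < 3" using vs' unfolding valid_def by blast
  next
    fix k show "e'' k < 2" using vs' vsr unfolding valid_def e''_def by simp
  qed
  let ?q = "(gen s' G e'', G)"
  have "opt L v st AC ?q a"
    unfolding opt_def
  proof (intro conjI)
    show "?q \<in> TT" using TT_I[OF val] .
    have "gen s' G e'' \<subseteq> gen s' B' e'"
      unfolding gen_subset_iff using alG pw by (metis (full_types))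
    thus "fst ?q \<subseteq> fst st" using se(2) B'_def by simp
    show "snd ?q \<inter> {..<L} = snd st \<inter> {..<L}" unfolding G_def B'_def by auto
    show "a \<in> AC" using a by simp
  next
    have vst: "v \<in> gen s' B' e'" using v sub se(2) B'_def by auto
    show "v \<in> fst ?q" unfolding gen_def fst_conv
    proof (intro CollectI allI impI)
      fix k assume "k < length v"
      thus "allowed s' G e'' k (v!k)" using vst alG v(2) unfolding gen_def by simp
    qed
  next
    have vr: "v \<in> gen sr Br er" using v sre(2) Br_def by simp
    show "\<forall>w\<in>fst ?q. prefix v w \<longrightarrow> w \<in> fst a"
    proof (intro ballI impI)
      fix w assume w: "w \<in> fst ?q" and pvw: "prefix v w"
      have "w \<in> gen sr Br er" unfolding gen_def
      proof (intro CollectI allI impI)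
        fix k assume k: "k < length w"
        show "allowed sr Br er k (w!k)"
        proof (cases "k < L")
          case True
          hence "w!k = v!k" using pvw v(2) by (metis prefix_def nth_append)
          moreover have "allowed sr Br er k (v!k)" using vr True v(2) unfolding gen_def by simp
          ultimately show ?thesis by simp
        next
          case False
          have "allowed s' G e'' k (w!k)" using w k unfolding gen_def by simp
          thus ?thesis using alG False by simp
        qed
      qed
      thus "w \<in> fst a" using a sre(2) Br_def by auto
    qed
  qed
  thus ?thesis by blast
qed

definition stp :: "cnd set \<Rightarrow> nat \<Rightarrow> nat list \<Rightarrow> cnd \<Rightarrow> cnd" where
  "stp AC L v st = (if \<exists>q' a. opt L v st AC q' a then (SOME q'. \<exists>a. opt L v st AC q' a) else st)"

definition Inv :: "nat \<Rightarrow> cnd \<Rightarrow> cnd \<Rightarrow> bool" where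
  "Inv L st st' \<longleftrightarrow> st' \<in> TT \<and> fst st' \<subseteq> fst st \<and> snd st' \<inter> {..<L} = snd st \<inter> {..<L}"

lemma Inv_refl: "st \<in> TT \<Longrightarrow> Inv L st st"
  unfolding Inv_def by simp

lemma Inv_trans: "Inv L a b \<Longrightarrow> Inv L b c \<Longrightarrow> Inv L a c"
  unfolding Inv_def by blast

lemma stp_opt: "\<exists>q' a. opt L v st AC q' a \<Longrightarrow> \<exists>a. opt L v st AC (stp AC L v st) a"
proof -
  assume ex: "\<exists>q' a. opt L v st AC q' a"
  hence "\<exists>q'. \<exists>a. opt L v st AC q' a" by blast
  hence "\<exists>a. opt L v st AC (SOME q'. \<exists>a. opt L v st AC q' a) a" by (rule someI_ex)
  thus ?thesis using ex unfolding stp_def by simp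
qed

lemma stp_Inv: "st \<in> TT \<Longrightarrow> Inv L st (stp AC L v st)"
proof (cases "\<exists>q' a. opt L v st AC q' a")
  case True
  then obtain a where "opt L v st AC (stp AC L v st) a" using stp_opt by blast
  thus ?thesis unfolding opt_def Inv_def by blast
next
  case False
  assume "st \<in> TT"
  thus ?thesis using False unfolding stp_def by (simp add: Inv_refl)
qed

lemma fold_Inv: "st \<in> TT \<Longrightarrow> Inv L st (fold (stp AC L) vs st)"
proof (induction vs arbitrary: st)
  case Nil thus ?case by (simp add: Inv_refl)
next
  case (Cons x xs)
  have i1: "Inv L st (stp AC L x st)" using stp_Inv Cons.prems by blast
  hence "stp AC L x st \<in> TT" unfolding Inv_def by blast
  hence "Inv L (stp AC L x st) (fold (stp AC L) xs (stp AC L x st))" using Cons.IH by blast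
  thus ?case using Inv_trans i1 by simp
qed

lemma fold_mid:
  "v \<in> set vs \<Longrightarrow> st \<in> TT \<Longrightarrow>
    \<exists>st'. Inv L st st' \<and> fst (fold (stp AC L) vs st) \<subseteq> fst (stp AC L v st')"
proof (induction vs arbitrary: st)
  case Nil thus ?case by simp
next
  case (Cons x xs)
  have i1: "Inv L st (stp AC L x st)" using stp_Inv Cons.prems by blast
  hence t1: "stp AC L x st \<in> TT" unfolding Inv_def by blast
  show ?case
  proof (cases "v = x")
    case True
    have "Inv L (stp AC L x st) (fold (stp AC L) xs (stp AC L x st))" using fold_Inv t1 by blast
    hence "fst (fold (stp AC L) (x # xs) st) \<subseteq> fst (stp AC L v st)"
      using True unfolding Inv_def by simp
    thus ?thesis using Inv_refl Cons.prems by blast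
  next
    case False
    hence "v \<in> set xs" using Cons.prems by simp
    then obtain st' where "Inv L (stp AC L x st) st'"
      "fst (fold (stp AC L) xs (stp AC L x st)) \<subseteq> fst (stp AC L v st')"
      using Cons.IH t1 by blast
    thus ?thesis using Inv_trans i1 by (metis fold_Cons comp_apply)
  qed
qed

definition Lof :: "nat \<Rightarrow> nat \<Rightarrow> cnd \<Rightarrow> nat" where
  "Lof n j st = enumerate (snd st) (max j n) + 1"

definition stage :: "cnd set \<Rightarrow> nat \<Rightarrow> nat \<Rightarrow> cnd \<Rightarrow> cnd" where
  "stage AC n j st = fold (stp AC (Lof n j st)) (List.n_lists (Lof n j st) [0,1,2]) st"

lemma TT_inf: "c \<in> TT \<Longrightarrow> infinite (snd c)"
  using TT_E valid_inf by blast

lemma stage_props: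
  assumes st: "st \<in> TT"
  shows "stage AC n j st \<in> TT \<and> TT_len (max j n) (stage AC n j st) st"
proof -
  let ?L = "Lof n j st"
  let ?r = "stage AC n j st"
  have I: "Inv ?L st ?r" unfolding stage_def using fold_Inv st by blast
  hence rT: "?r \<in> TT" and sub: "fst ?r \<subseteq> fst st" and eq: "snd st \<inter> {..<?L} = snd ?r \<inter> {..<?L}"
    unfolding Inv_def by auto
  have "\<forall>i\<le>max j n. enumerate (snd ?r) i = enumerate (snd st) i"
  proof (intro allI impI)
    fix i assume i: "i \<le> max j n"
    have "enumerate (snd st) i \<le> enumerate (snd st) (max j n)" using i TT_inf[OF st] by simp
    hence "enumerate (snd st) i < ?L" unfolding Lof_def by simp
    thus "enumerate (snd ?r) i = enumerate (snd st) i"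
      using enum_agree2[OF TT_inf[OF st] TT_inf[OF rT] eq] by blast
  qed
  thus ?thesis using rT sub unfolding TT_len_def TT_le_def by simp
qed

primrec seqq :: "cnd set \<Rightarrow> nat \<Rightarrow> cnd \<Rightarrow> nat \<Rightarrow> cnd" where
  "seqq AC n p 0 = p"
| "seqq AC n p (Suc j) = stage AC n j (seqq AC n p j)"

lemma TT_len_mono: "TT_len m q p \<Longrightarrow> i \<le> m \<Longrightarrow> TT_len i q p"
  unfolding TT_len_def by auto

lemma TT_len_trans: "TT_len n a b \<Longrightarrow> TT_len n b c \<Longrightarrow> TT_len n a c"
  unfolding TT_len_def TT_le_def by auto

lemma seqq_props:
  assumes p: "p \<in> TT"
  shows "seqq AC n p j \<in> TT \<and> TT_len (max j n) (seqq AC n p (Suc j)) (seqq AC n p j)"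
proof (induction j)
  case 0
  have "stage AC n 0 p \<in> TT \<and> TT_len (max 0 n) (stage AC n 0 p) p" by (rule stage_props[OF p])
  thus ?case using p by simp
next
  case (Suc j)
  hence t: "seqq AC n p j \<in> TT" by blast
  have "stage AC n j (seqq AC n p j) \<in> TT" using stage_props[OF t] by blast
  hence t2: "seqq AC n p (Suc j) \<in> TT" by simp
  have "stage AC n (Suc j) (seqq AC n p (Suc j)) \<in> TT \<and>
     TT_len (max (Suc j) n) (stage AC n (Suc j) (seqq AC n p (Suc j))) (seqq AC n p (Suc j))"
    by (rule stage_props[OF t2])
  thus ?case using t2 by simp
qed

lemma seqq_n:
  assumes p: "p \<in> TT"
  shows "TT_len n (seqq AC n p j) p"
proof (induction j)
  case 0 show ?case unfolding TT_len_def TT_le_def by simp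
next
  case (Suc j)
  have "TT_len n (seqq AC n p (Suc j)) (seqq AC n p j)"
    using seqq_props[OF p] TT_len_mono by (metis max.cobounded2)
  thus ?case using Suc TT_len_trans by blast
qed

lemma item8:
  assumes ac: "antichain TT TT_le AC" and p: "p \<in> TT"
  shows "\<exists>q\<in>TT. TT_len n q p \<and> countable {a\<in>AC. compatible TT TT_le q a}"
proof -
  define ps where "ps = seqq AC n p"
  have psT: "\<forall>m. ps m \<in> TT" using seqq_props[OF p] ps_def by blast
  have psL: "\<forall>m. TT_len m (ps (Suc m)) (ps m)"
    using seqq_props[OF p] TT_len_mono ps_def by (metis max.cobounded1)
  obtain q where qT: "q \<in> TT" and qL: "\<forall>m. TT_len m q (ps m)" using fusion[OF psT psL] by blast
  have qn: "TT_len n q p" using qL[rule_format, of n] seqq_n[OF p] ps_def TT_len_trans by blast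
  have ACT: "AC \<subseteq> TT" using ac unfolding antichain_def by blast
  have ac2: "a1 = a2" if "a1 \<in> AC" "a2 \<in> AC" "compatible TT TT_le a1 a2" for a1 a2
    using ac that unfolding antichain_def by blast
  let ?S = "{a\<in>AC. compatible TT TT_le q a}"
  have key: "\<exists>v. v \<in> fst q \<and> (\<forall>w\<in>fst q. prefix v w \<longrightarrow> w \<in> fst a)" if aS: "a \<in> ?S" for a
  proof -
    have aAC: "a \<in> AC" using aS by blast
    obtain r where r: "r \<in> TT" "TT_le r q" "TT_le r a" using aS unfolding compatible_def by blast
    obtain sr er where sre: "valid sr (snd r) er" "fst r = gen sr (snd r) er" using TT_E[OF r(1)] by blast
    define j where "j = max n (length sr)"
    define L where "L = Lof n j (ps j)"
    have Lj: "L = enumerate (snd (ps j)) j + 1" unfolding L_def Lof_def j_def by simp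
    have infj: "infinite (snd (ps j))" using TT_inf psT by blast
    have jL: "j < L" using Lj le_enumerate[OF infj, of j] by simp
    define v where "v = map (pick sr (snd r) er) [0..<L]"
    have vr: "v \<in> fst r" using sre(2) map_pick_in v_def by simp
    have lv: "length v = L" using v_def by simp
    have vset: "v \<in> set (List.n_lists L [0,1,2])"
      unfolding set_n_lists
    proof (intro CollectI conjI lv subsetI)
      fix x assume "x \<in> set v"
      then obtain k where k: "k < length v" "x = v!k" by (metis in_set_conv_nth)
      have "allowed sr (snd r) er k x" using vr sre(2) k unfolding gen_def by blast
      hence "x < 3" using allowed_lt3 sre(1) by blast
      thus "x \<in> set [0,1,2]" by auto
    qed
    have psS: "ps (Suc j) = fold (stp AC L) (List.n_lists L [0,1,2]) (ps j)"
      using ps_def L_def stage_def by simp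
    obtain st' where st': "Inv L (ps j) st'" "fst (ps (Suc j)) \<subseteq> fst (stp AC L v st')"
      using fold_mid[OF vset psT[rule_format, of j]] psS by metis
    have st'T: "st' \<in> TT" and st'eq: "snd (ps j) \<inter> {..<L} = snd st' \<inter> {..<L}"
      using st'(1) unfolding Inv_def by auto
    have qsub: "fst q \<subseteq> fst (ps (Suc j))" using qL unfolding TT_len_def TT_le_def by blast
    have stpsub: "fst (stp AC L v st') \<subseteq> fst st'" using stp_Inv[OF st'T] unfolding Inv_def by blast
    have rq: "fst r \<subseteq> fst q" using r(2) unfolding TT_le_def by simp
    have ra: "fst r \<subseteq> fst a" using r(3) unfolding TT_le_def by simp
    have rst: "fst r \<subseteq> fst st'" using rq qsub st'(2) stpsub by blast
    have L1: "enumerate (snd r) 0 < L" using valid_enum0[OF sre(1)] j_def jL by simp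
    have e0: "enumerate (snd (ps j)) 0 < L"
      using Lj infj by (metis enumerate_mono_le_iff le0 le_imp_less_Suc Suc_eq_plus1)
    have L2: "enumerate (snd st') 0 < L"
      using enum_agree2[OF infj TT_inf[OF st'T] st'eq e0] e0 by simp
    have "\<exists>q' a'. opt L v st' AC q' a'"
      by (rule graft_opt[OF st'T r(1) rst vr lv L1 L2 aAC ra])
    then obtain a' where a': "opt L v st' AC (stp AC L v st') a'" using stp_opt by blast
    have a'AC: "a' \<in> AC" and cone: "\<forall>w\<in>fst (stp AC L v st'). prefix v w \<longrightarrow> w \<in> fst a'"
      using a' unfolding opt_def by auto
    have sq: "fst q \<subseteq> fst (stp AC L v st')" using qsub st'(2) by blast
    have "compatible TT TT_le a a'"
    proof (rule cone_compat[OF r(1) vr])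
      show "a \<in> TT" "a' \<in> TT" using aAC a'AC ACT by auto
      show "\<forall>w\<in>fst r. prefix v w \<longrightarrow> w \<in> fst a" using ra by blast
      show "\<forall>w\<in>fst r. prefix v w \<longrightarrow> w \<in> fst a'" using cone rq sq by blast
    qed
    hence "a = a'" using ac2 aAC a'AC by blast
    moreover have "v \<in> fst q" using vr rq by blast
    ultimately show ?thesis using cone sq by blast
  qed
  define f where "f (a::cnd) = (SOME v. v \<in> fst q \<and> (\<forall>w\<in>fst q. prefix v w \<longrightarrow> w \<in> fst a))" for a
  have fprop: "f a \<in> fst q \<and> (\<forall>w\<in>fst q. prefix (f a) w \<longrightarrow> w \<in> fst a)" if "a \<in> ?S" for a
    unfolding f_def using someI_ex[OF key[OF that]] .
  have "inj_on f ?S"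
  proof (rule inj_onI)
    fix a1 a2 assume a1: "a1 \<in> ?S" and a2: "a2 \<in> ?S" and eq: "f a1 = f a2"
    have "compatible TT TT_le a1 a2"
    proof (rule cone_compat[OF qT])
      show "f a1 \<in> fst q" using fprop a1 by blast
      show "a1 \<in> TT" "a2 \<in> TT" using a1 a2 ACT by auto
      show "\<forall>w\<in>fst q. prefix (f a1) w \<longrightarrow> w \<in> fst a1" using fprop a1 by blast
      show "\<forall>w\<in>fst q. prefix (f a1) w \<longrightarrow> w \<in> fst a2" using fprop a2 eq by metis
    qed
    thus "a1 = a2" using ac2 a1 a2 by blast
  qed
  hence "countable ?S" by (rule countable_image_inj_on[rotated]) simp
  thus ?thesis using qT qn by blast
qed

theorem mainTheorem2:
  shows "axiomA TT TT_le TT_len"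
  unfolding axiomA_def
proof (intro conjI)
  show "\<forall>p\<in>TT. TT_le p p" unfolding TT_le_def by simp
  show "\<forall>p\<in>TT. \<forall>q\<in>TT. \<forall>r\<in>TT. TT_le r q \<longrightarrow> TT_le q p \<longrightarrow> TT_le r p" unfolding TT_le_def by blast
  show "\<forall>n. \<forall>p\<in>TT. TT_len n p p" unfolding TT_len_def TT_le_def by simp
  show "\<forall>n. \<forall>p\<in>TT. \<forall>q\<in>TT. \<forall>r\<in>TT. TT_len n r q \<longrightarrow> TT_len n q p \<longrightarrow> TT_len n r p"
    using TT_len_trans by blast
  show "\<forall>p\<in>TT. \<forall>q\<in>TT. TT_len 0 q p \<longrightarrow> TT_le q p" unfolding TT_len_def by simp
  show "\<forall>n. \<forall>p\<in>TT. \<forall>q\<in>TT. TT_len (Suc n) q p \<longrightarrow> TT_len n q p"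
    using TT_len_mono by (metis le_SucI order_refl)
  show "\<forall>ps. (\<forall>n. ps n \<in> TT) \<longrightarrow> (\<forall>n. TT_len n (ps (Suc n)) (ps n)) \<longrightarrow>
        (\<exists>q\<in>TT. \<forall>n. TT_len n q (ps n))" using fusion by blast
  show "\<forall>A. antichain TT TT_le A \<longrightarrow> (\<forall>p\<in>TT. \<forall>n. \<exists>q\<in>TT. TT_len n q p \<and>
        countable {a\<in>A. compatible TT TT_le q a})" using item8 by blast
qed

end
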